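(* Let $t$ be a positive integer. (1) If there exists a good vector with respect to $t$ of length $2t$, then for every positive integer $n$ with $(4t+1)\mid n$, $N_P(n,2t+1,4t+1)\le (t+1)n$. (2) For every positive integer $n$ with $(4t+2)\mid n$, $N_P(n,2t+1,4t+2)\le (t+1)n$.
   Context: Good vector: for a positive integer $t$, a vector $\mathbf v=(v_1,\dots,v_{2t})\in[t]^{2t}$ or $\mathbf v\in\{0,\dots,t\}^{2t+1}$ is good w.r.t. $t$ if every $j\in[t]=\{1,\dots,t\}$ appears exactly twice in $\mathbf v$ and whenever $v_i=v_{i'}=j\in[t]$ with $i<i'$ then $i'-i=j$. Fix a finite field $\mathbb{F}_q$. An $(n,N,k,m)$-PIR array code over $\mathbb{F}_q$ is an $\mathbb{F}_q$-linear map $\mathbf x\in\mathbb{F}_q^n\mapsto(\mathbf c_1,\dots,\mathbf c_m)$ with buckets $\mathbf c_\ell\in\mathbb{F}_q^{N_\ell}$, $N_\ell\ge1$ independent of $\mathbf x$, $\sum_\ell N_\ell=N$, such that for each $i\in[n]$ there is a partition of $[m]$ into $k$ sets $R_1,\dots,R_k$ such that for each $j$, $x_i$ is an $\mathbb{F}_q$-linear combination of values $f_\ell(\mathbf c_\ell)$, $\ell\in R_j$, for some linear functionals $f_\ell$ (independent of $\mathbf x$). $N_P(n,k,m)$ is the minimum $N$ for which such a code exists. *)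

theory Defs
  imports Main
begin

text \<open>Good vectors w.r.t. t, as lists (positions are 0-based here; only
differences of positions matter). Either of length 2t with entries in [t],
or of length 2t+1 with entries in {0,...,t}.\<close>
definition good_vec :: "nat \<Rightarrow> nat list \<Rightarrow> bool" where
  "good_vec t v \<longleftrightarrow>
     ((length v = 2*t \<and> set v \<subseteq> {1..t}) \<or> (length v = 2*t+1 \<and> set v \<subseteq> {0..t})) \<and>
     (\<forall>j\<in>{1..t}. count_list v j = 2) \<and>
     (\<forall>i i'. i < i' \<and> i' < length v \<and> v!i = v!i' \<and> v!i \<in> {1..t} \<longrightarrow> i' - i = v!i)"

text \<open>Messages are x :: nat => 'a,
of which only x 0,...,x (n-1) matter.  Bucket l < m has Nl l >= 1 coordinates;
coordinate p < Nl l of bucket l is the linear form  sum_{r<n} G l p r * x r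
(an arbitrary linear map F^n -> F^{Nl l}).  For each i < n there is a partition
R 0, ..., R (k-1) of {0..<m} into k (nonempty) sets and linear functionals
f l (given by coefficients f l p) on the buckets such that for every j < k,
x i is a linear combination (coefficients lam l) of the values f l (c l), l in R j.\<close>
definition pir_code :: "nat \<Rightarrow> nat \<Rightarrow> nat \<Rightarrow> nat \<Rightarrow> (nat \<Rightarrow> nat) \<Rightarrow> (nat \<Rightarrow> nat \<Rightarrow> nat \<Rightarrow> 'a::field) \<Rightarrow> bool" where
  "pir_code n N k m Nl G \<longleftrightarrow>
     (\<forall>l<m. Nl l \<ge> 1) \<and> (\<Sum>l<m. Nl l) = N \<and>
     (\<forall>i<n. \<exists>(R :: nat \<Rightarrow> nat set) (f :: nat \<Rightarrow> nat \<Rightarrow> 'a) (lam :: nat \<Rightarrow> 'a).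
        (\<forall>j<k. R j \<noteq> {}) \<and>
        (\<forall>j<k. \<forall>j'<k. j \<noteq> j' \<longrightarrow> R j \<inter> R j' = {}) \<and>
        (\<Union>j<k. R j) = {..<m} \<and>
        (\<forall>j<k. \<forall>x :: nat \<Rightarrow> 'a.
           x i = (\<Sum>l\<in>R j. lam l * (\<Sum>p<Nl l. f l p * (\<Sum>r<n. G l p r * x r)))))"

definition has_PIR :: "'a::field itself \<Rightarrow> nat \<Rightarrow> nat \<Rightarrow> nat \<Rightarrow> nat \<Rightarrow> bool" where
  "has_PIR T n N k m \<longleftrightarrow> (\<exists>Nl (G :: nat \<Rightarrow> nat \<Rightarrow> nat \<Rightarrow> 'a). pir_code n N k m Nl G)"

definition N_P :: "'a::field itself \<Rightarrow> nat \<Rightarrow> nat \<Rightarrow> nat \<Rightarrow> nat" where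
  "N_P T n k m = (LEAST N. has_PIR T n N k m)"

end

theory Submission
  imports Defs
begin

lemma ind_sum:
  fixes x :: "nat \<Rightarrow> 'a::field"
  shows "(\<Sum>r<N. (if r = A then 1 else 0) * x r) = (if A < N then x A else 0)"
  by (simp add: if_distrib[where f="\<lambda>z. z * _"] cong: if_cong)

lemma coord_sum:
  fixes W :: "nat \<Rightarrow> 'a::field"
  shows "(\<Sum>p<N. (if p = c then v else 0) * W p) = (if c < N then v * W c else 0)"
  by (simp add: if_distrib[where f="\<lambda>z. z * _"] cong: if_cong)

lemma idx_lt: "q < (s::nat) \<Longrightarrow> y < m \<Longrightarrow> q*m + y < m*s"
proof -
  assume a: "q < s" "y < m"
  have "q*m + y < Suc q * m" using a by simp
  also have "\<dots> \<le> s * m" using a by (intro mult_le_mono1) simp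
  finally show ?thesis by (simp add: mult.commute)
qed

lemma modsub: "(c::nat) \<le> m \<Longrightarrow> ((a+b) mod m + m - c) mod m = (a + b + m - c) mod m"
proof -
  assume c: "c \<le> m"
  have "((a+b) mod m + m - c) mod m = ((a+b) mod m + (m - c)) mod m" using c by simp
  also have "\<dots> = (a+b + (m-c)) mod m" by (simp add: mod_add_left_eq)
  also have "\<dots> = (a + b + m - c) mod m" using c by simp
  finally show ?thesis .
qed

lemma offmod: "(a::nat) < m \<Longrightarrow> w < m \<Longrightarrow> ((a+w) mod m + m - a) mod m = w"
  by (simp add: modsub)

lemma offmod2: "(a::nat) < m \<Longrightarrow> w < m \<Longrightarrow> ((a+w) mod m + m - w) mod m = a"
  by (simp add: modsub)

lemma backmod: "(a::nat) < m \<Longrightarrow> l < m \<Longrightarrow> (a + (l + m - a) mod m) mod m = l"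
proof -
  assume "a < m" "l < m"
  hence "(a + (l + m - a) mod m) mod m = (a + (l+m-a)) mod m" by (simp add: mod_add_right_eq)
  also have "\<dots> = (l + m) mod m" using \<open>a<m\<close> by simp
  finally show ?thesis using \<open>l<m\<close> by simp
qed

lemma crossmod: "(b::nat) < m \<Longrightarrow> c \<le> m \<Longrightarrow> ((a+b) mod m + m - c) mod m = (a + (b + m - c) mod m) mod m"
proof -
  assume "b < m" "c \<le> m"
  have "((a+b) mod m + m - c) mod m = (a + b + m - c) mod m" using \<open>c\<le>m\<close> by (rule modsub)
  also have "\<dots> = (a + (b + m - c)) mod m" using \<open>c\<le>m\<close> by (simp add: add.assoc)
  also have "\<dots> = (a + (b + m - c) mod m) mod m" by (simp add: mod_add_right_eq)
  finally show ?thesis .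
qed

definition cG :: "nat \<Rightarrow> nat \<Rightarrow> (nat \<Rightarrow> nat) \<Rightarrow> (nat \<Rightarrow> nat) \<Rightarrow> nat \<Rightarrow> nat \<Rightarrow> nat \<Rightarrow> 'a::field" where
 "cG m s \<beta> \<eta> l p r = (if p div s = 0 then (if r = (p mod s)*m + l then 1 else 0)
    else (if r = (p mod s)*m + (l + m - \<beta> (p div s - 1)) mod m then 1 else 0)
       + (if r = (p mod s)*m + (l + m - \<eta> (p div s - 1)) mod m then 1 else 0))"

lemma V0:
  fixes x :: "nat \<Rightarrow> 'a::field"
  shows "q < s \<Longrightarrow> l < m \<Longrightarrow> (\<Sum>r<m*s. cG m s \<beta> \<eta> l q r * x r) = x (q*m + l)"
  by (simp add: cG_def ind_sum idx_lt)

lemma V1: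
  fixes x :: "nat \<Rightarrow> 'a::field"
  assumes "q < s" "m > 0"
  shows "(\<Sum>r<m*s. cG m s \<beta> \<eta> l (Suc i * s + q) r * x r)
     = x (q*m + (l + m - \<beta> i) mod m) + x (q*m + (l + m - \<eta> i) mod m)"
proof -
  have e: "Suc i * s + q = q + Suc i * s" by simp
  have d: "(Suc i * s + q) div s = Suc i" "(Suc i * s + q) mod s = q" using assms
    unfolding e by (auto simp del: mult_Suc)
  show ?thesis using assms
    by (simp add: cG_def d distrib_right sum.distrib ind_sum idx_lt del: mult_Suc)
qed

definition ccoord :: "nat \<Rightarrow> nat \<Rightarrow> (nat \<Rightarrow> nat) \<Rightarrow> (nat \<Rightarrow> nat) \<Rightarrow> nat \<Rightarrow> nat \<Rightarrow> nat" where
 "ccoord t s \<beta> \<eta> q w = (if \<exists>i<t. w = \<beta> i \<or> w = \<eta> i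
     then Suc (SOME i. i<t \<and> (w = \<beta> i \<or> w = \<eta> i)) * s + q else q)"

definition csg :: "nat \<Rightarrow> (nat \<Rightarrow> nat) \<Rightarrow> (nat \<Rightarrow> nat) \<Rightarrow> (nat \<Rightarrow> nat) \<Rightarrow> (nat \<Rightarrow> nat) \<Rightarrow> nat \<Rightarrow> 'a::field" where
 "csg t \<beta> \<eta> \<alpha> \<gamma> w = (if w = 0 \<or> (\<exists>i<t. w = \<beta> i \<or> w = \<eta> i) then 1
     else if (\<exists>i<t. w = \<alpha> i \<or> w = \<gamma> i) then -1 else 0)"

lemma ccoord_lt: assumes "q < s" shows "ccoord t s \<beta> \<eta> q w < (t+1)*s"
proof (cases "\<exists>i<t. w = \<beta> i \<or> w = \<eta> i")
  case True
  define i where "i = (SOME i. i<t \<and> (w = \<beta> i \<or> w = \<eta> i))"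
  have it: "i < t" using someI_ex[OF True[unfolded Bex_def[symmetric]]] True unfolding i_def
    by (metis (mono_tags, lifting) someI_ex)
  have "ccoord t s \<beta> \<eta> q w = Suc i * s + q" using True by (simp add: ccoord_def i_def)
  also have "\<dots> < Suc (Suc i) * s" using assms by simp
  also have "\<dots> \<le> (t+1)*s" using it by (intro mult_le_mono1) simp
  finally show ?thesis .
next
  case False
  have "ccoord t s \<beta> \<eta> q w = q" using False unfolding ccoord_def by (rule if_not_P)
  then show ?thesis using assms by simp
qed

lemma par_div: "(j::nat) \<ge> 1 \<Longrightarrow> j' \<ge> 1 \<Longrightarrow> (odd j \<longleftrightarrow> odd j') \<Longrightarrow> (j-1) div 2 = (j'-1) div 2 \<Longrightarrow> j = j'"
proof (cases "odd j")
  case True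
  assume "j \<ge> 1" "j' \<ge> 1" "odd j \<longleftrightarrow> odd j'" "(j-1) div 2 = (j'-1) div 2"
  then obtain k k' where "j = 2*k+1" "j' = 2*k'+1" using True by (auto elim!: oddE)
  then show ?thesis using \<open>(j-1) div 2 = (j'-1) div 2\<close> by simp
next
  case False
  assume "j \<ge> 1" "j' \<ge> 1" "odd j \<longleftrightarrow> odd j'" "(j-1) div 2 = (j'-1) div 2"
  then obtain k k' where "j = 2*k" "j' = 2*k'" using False by (auto elim!: evenE)
  moreover have "k \<ge> 1" "k' \<ge> 1" using calculation \<open>j\<ge>1\<close> \<open>j'\<ge>1\<close> by auto
  ultimately show ?thesis using \<open>(j-1) div 2 = (j'-1) div 2\<close> by (cases k; cases k'; simp)
qed

lemma construction:
  fixes m s t :: nat and \<beta> \<eta> \<alpha> \<gamma> :: "nat \<Rightarrow> nat"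
  assumes s1: "s \<ge> 1"
  and rng: "\<And>i. i < t \<Longrightarrow> 0 < \<beta> i \<and> \<beta> i < m \<and> 0 < \<eta> i \<and> \<eta> i < m \<and> 0 < \<alpha> i \<and> \<alpha> i < m \<and> 0 < \<gamma> i \<and> \<gamma> i < m"
  and eqa: "\<And>i. i<t \<Longrightarrow> (\<beta> i + m - \<eta> i) mod m = \<alpha> i"
  and eqg: "\<And>i. i<t \<Longrightarrow> (\<eta> i + m - \<beta> i) mod m = \<gamma> i"
  and ib: "\<And>i i'. i<t \<Longrightarrow> i'<t \<Longrightarrow> \<beta> i = \<beta> i' \<Longrightarrow> i = i'"
  and ie: "\<And>i i'. i<t \<Longrightarrow> i'<t \<Longrightarrow> \<eta> i = \<eta> i' \<Longrightarrow> i = i'"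
  and ia: "\<And>i i'. i<t \<Longrightarrow> i'<t \<Longrightarrow> \<alpha> i = \<alpha> i' \<Longrightarrow> i = i'"
  and ig: "\<And>i i'. i<t \<Longrightarrow> i'<t \<Longrightarrow> \<gamma> i = \<gamma> i' \<Longrightarrow> i = i'"
  and d1: "\<And>i i'. i<t \<Longrightarrow> i'<t \<Longrightarrow> \<beta> i \<noteq> \<eta> i'"
  and d2: "\<And>i i'. i<t \<Longrightarrow> i'<t \<Longrightarrow> \<beta> i \<noteq> \<alpha> i'"
  and d3: "\<And>i i'. i<t \<Longrightarrow> i'<t \<Longrightarrow> \<beta> i \<noteq> \<gamma> i'"
  and d4: "\<And>i i'. i<t \<Longrightarrow> i'<t \<Longrightarrow> \<eta> i \<noteq> \<alpha> i'"
  and d5: "\<And>i i'. i<t \<Longrightarrow> i'<t \<Longrightarrow> \<eta> i \<noteq> \<gamma> i'"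
  and d6: "\<And>i i'. i<t \<Longrightarrow> i'<t \<Longrightarrow> \<alpha> i \<noteq> \<gamma> i'"
  shows "has_PIR TYPE('a::field) (m*s) ((t+1)*(m*s)) (2*t+1) m"
proof -
  define n where "n = m*s"
  define Nl where "Nl = (\<lambda>l::nat. (t+1)*s)"
  define G where "G = (cG m s \<beta> \<eta> :: nat \<Rightarrow> nat \<Rightarrow> nat \<Rightarrow> 'a)"
  have P1: "\<forall>l<m. Nl l \<ge> 1" using s1 by (simp add: Nl_def)
  have P2: "(\<Sum>l<m. Nl l) = (t+1)*n" by (simp add: Nl_def n_def algebra_simps)
  have P3: "\<exists>(R :: nat \<Rightarrow> nat set) (f :: nat \<Rightarrow> nat \<Rightarrow> 'a) (lam :: nat \<Rightarrow> 'a).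
        (\<forall>j<2*t+1. R j \<noteq> {}) \<and>
        (\<forall>j<2*t+1. \<forall>j'<2*t+1. j \<noteq> j' \<longrightarrow> R j \<inter> R j' = {}) \<and>
        (\<Union>j<2*t+1. R j) = {..<m} \<and>
        (\<forall>j<2*t+1. \<forall>x :: nat \<Rightarrow> 'a.
           x r = (\<Sum>l\<in>R j. lam l * (\<Sum>p<Nl l. f l p * (\<Sum>r'<n. G l p r' * x r'))))"
    if r: "r < n" for r
  proof -
    define a where "a = r mod m"
    define q where "q = r div m"
    have m0: "m > 0" using r by (cases "m = 0") (auto simp: n_def)
    have am: "a < m" using m0 by (simp add: a_def)
    have qs: "q < s" using r m0 unfolding q_def n_def
      by (simp add: less_mult_imp_div_less mult.commute)
    have rq: "r = q*m + a" by (simp add: a_def q_def)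
    define Off where "Off = \<beta> ` {..<t} \<union> \<eta> ` {..<t} \<union> \<alpha> ` {..<t} \<union> \<gamma> ` {..<t}"
    define Oj where "Oj = (\<lambda>j::nat. if odd j then {\<beta> ((j-1) div 2), \<alpha> ((j-1) div 2)}
                                    else {\<eta> ((j-1) div 2), \<gamma> ((j-1) div 2)})"
    define sh where "sh = (\<lambda>w. (a + w) mod m)"
    define ofs where "ofs = (\<lambda>l. (l + m - a) mod m)"
    define R where "R = (\<lambda>j. if j = 0 then {l. l < m \<and> ofs l \<notin> Off} else sh ` Oj j)"
    define f where "f = (\<lambda>l p. if p = ccoord t s \<beta> \<eta> q (ofs l) then csg t \<beta> \<eta> \<alpha> \<gamma> (ofs l) else (0::'a))"
    define lam where "lam = (\<lambda>l::nat. (1::'a))"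
    have ofs_sh: "w < m \<Longrightarrow> ofs (sh w) = w" for w using am by (simp add: ofs_def sh_def offmod)
    have sh_ofs: "l < m \<Longrightarrow> sh (ofs l) = l" for l using am by (simp add: ofs_def sh_def backmod)
    have shm: "sh w < m" for w using m0 by (simp add: sh_def)
    have OOff: "j \<in> {1..2*t} \<Longrightarrow> Oj j \<subseteq> Off" for j
      by (auto simp: Oj_def Off_def)
    have Olt: "j \<in> {1..2*t} \<Longrightarrow> w \<in> Oj j \<Longrightarrow> w < m" for j w
      using rng by (auto simp: Oj_def split: if_splits)
    have Odisj: "j \<in> {1..2*t} \<Longrightarrow> j' \<in> {1..2*t} \<Longrightarrow> j \<noteq> j' \<Longrightarrow> Oj j \<inter> Oj j' = {}" for j j'
    proof -
      assume j: "j \<in> {1..2*t}" and j': "j' \<in> {1..2*t}" and jj: "j \<noteq> j'"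
      define i where "i = (j-1) div 2"
      define i' where "i' = (j'-1) div 2"
      have it: "i < t" "i' < t" using j j' by (auto simp: i_def i'_def)
      have ne: "odd j \<longleftrightarrow> odd j' \<Longrightarrow> i \<noteq> i'" using j j' jj unfolding i_def i'_def
        using par_div[of j j'] by auto
      have Oi: "Oj j = (if odd j then {\<beta> i, \<alpha> i} else {\<eta> i, \<gamma> i})" by (simp add: Oj_def i_def)
      have Oi': "Oj j' = (if odd j' then {\<beta> i', \<alpha> i'} else {\<eta> i', \<gamma> i'})" by (simp add: Oj_def i'_def)
      show ?thesis
      proof (cases "i = i'")
        case True
        then have "odd j \<noteq> odd j'" using ne by blast
        then show ?thesis unfolding Oi Oi' using True it d1[of i i] d3[of i i] d4[of i i] d6[of i i]
          by (cases "odd j") auto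
      next
        case False
        have f: "\<beta> i \<noteq> \<beta> i'" "\<eta> i \<noteq> \<eta> i'" "\<alpha> i \<noteq> \<alpha> i'" "\<gamma> i \<noteq> \<gamma> i'"
          using False it ib ie ia ig by blast+
        show ?thesis unfolding Oi Oi' using f it
          d1[of i i'] d2[of i i'] d3[of i i'] d4[of i i'] d5[of i i'] d6[of i i']
          d1[of i' i] d2[of i' i] d3[of i' i] d4[of i' i] d5[of i' i] d6[of i' i]
          by (cases "odd j"; cases "odd j'") auto
      qed
    qed
    have shinj: "w < m \<Longrightarrow> w' < m \<Longrightarrow> sh w = sh w' \<Longrightarrow> w = w'" for w w'
      by (metis ofs_sh)
    have Rne: "\<forall>j<2*t+1. R j \<noteq> {}"
    proof (intro allI impI)
      fix j assume "j < 2*t+1"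
      show "R j \<noteq> {}"
      proof (cases "j = 0")
        case True
        have "ofs a = 0" using am by (simp add: ofs_def)
        moreover have "0 \<notin> Off" using rng by (fastforce simp: Off_def)
        ultimately have "a \<in> R j" using True am by (simp add: R_def)
        then show ?thesis by blast
      qed (simp add: R_def Oj_def)
    qed
    have Rdisj: "\<forall>j<2*t+1. \<forall>j'<2*t+1. j \<noteq> j' \<longrightarrow> R j \<inter> R j' = {}"
    proof (intro allI impI)
      fix j j' assume j: "j < 2*t+1" and j': "j' < 2*t+1" and jj: "j \<noteq> j'"
      have key: "R 0 \<inter> R k = {}" if "k \<in> {1..2*t}" for k
        using that OOff[OF that] Olt[OF that] ofs_sh by (auto simp: R_def)
      show "R j \<inter> R j' = {}"
      proof (cases "j = 0 \<or> j' = 0")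
        case True
        then show ?thesis using key[of j] key[of j'] j j' jj by auto
      next
        case False
        hence jr: "j \<in> {1..2*t}" "j' \<in> {1..2*t}" using j j' by auto
        show ?thesis
        proof (rule ccontr)
          assume "R j \<inter> R j' \<noteq> {}"
          then obtain w w' where "w \<in> Oj j" "w' \<in> Oj j'" "sh w = sh w'" using False by (auto simp: R_def)
          then show False using Odisj[OF jr jj] shinj Olt jr by blast
        qed
      qed
    qed
    have Runion: "(\<Union>j<2*t+1. R j) = {..<m}"
    proof
      show "(\<Union>j<2*t+1. R j) \<subseteq> {..<m}" using shm by (auto simp: R_def)
    next
      show "{..<m} \<subseteq> (\<Union>j<2*t+1. R j)"
      proof
        fix l assume l: "l \<in> {..<m}"
        show "l \<in> (\<Union>j<2*t+1. R j)"
        proof (cases "ofs l \<in> Off")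
          case False
          then have "l \<in> R 0" using l by (simp add: R_def)
          then show ?thesis by auto
        next
          case True
          then obtain i where it: "i < t" and "ofs l = \<beta> i \<or> ofs l = \<eta> i \<or> ofs l = \<alpha> i \<or> ofs l = \<gamma> i"
            by (auto simp: Off_def)
          then have "ofs l \<in> Oj (2*i+1) \<or> ofs l \<in> Oj (2*i+2)" by (auto simp: Oj_def)
          then have "l \<in> sh ` Oj (2*i+1) \<or> l \<in> sh ` Oj (2*i+2)" using sh_ofs[of l] l
            by (metis imageI lessThan_iff)
          then have "l \<in> R (2*i+1) \<or> l \<in> R (2*i+2)" by (simp add: R_def)
          moreover have "2*i+1 \<in> {..<2*t+1}" "2*i+2 \<in> {..<2*t+1}" using it by auto
          ultimately show ?thesis by blast
        qed
      qed
    qed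
    have ofs0: "ofs a = 0" using am by (simp add: ofs_def)
    have Fev: "(\<Sum>p<Nl l. f l p * (\<Sum>r'<n. G l p r' * x r')) =
       csg t \<beta> \<eta> \<alpha> \<gamma> (ofs l) * (\<Sum>r'<n. G l (ccoord t s \<beta> \<eta> q (ofs l)) r' * x r')" for l x
      using ccoord_lt[OF qs, of t \<beta> \<eta> "ofs l"] by (simp add: f_def Nl_def coord_sum)
    have cb: "ccoord t s \<beta> \<eta> q (\<beta> i) = Suc i * s + q" if it: "i < t" for i
    proof -
      have "(SOME i'. i'<t \<and> (\<beta> i = \<beta> i' \<or> \<beta> i = \<eta> i')) = i"
        using it ib d1 by (intro some_equality) auto
      then show ?thesis using it by (auto simp: ccoord_def)
    qed
    have ce: "ccoord t s \<beta> \<eta> q (\<eta> i) = Suc i * s + q" if it: "i < t" for i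
    proof -
      have "(SOME i'. i'<t \<and> (\<eta> i = \<beta> i' \<or> \<eta> i = \<eta> i')) = i"
        using it ie d1 by (intro some_equality) (auto, metis)
      then show ?thesis using it by (auto simp: ccoord_def)
    qed
    have ca: "ccoord t s \<beta> \<eta> q (\<alpha> i) = q" if it: "i < t" for i
    proof -
      have "\<not>(\<exists>i'<t. \<alpha> i = \<beta> i' \<or> \<alpha> i = \<eta> i')" using it d2 d4 by metis
      then show ?thesis unfolding ccoord_def by (rule if_not_P)
    qed
    have cg: "ccoord t s \<beta> \<eta> q (\<gamma> i) = q" if it: "i < t" for i
    proof -
      have "\<not>(\<exists>i'<t. \<gamma> i = \<beta> i' \<or> \<gamma> i = \<eta> i')" using it d3 d5 by metis
      then show ?thesis unfolding ccoord_def by (rule if_not_P)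
    qed
    have c0: "ccoord t s \<beta> \<eta> q 0 = q" using rng by (fastforce simp: ccoord_def)
    have sb: "csg t \<beta> \<eta> \<alpha> \<gamma> (\<beta> i) = (1::'a)" if it: "i < t" for i
      using it by (auto simp: csg_def)
    have se: "csg t \<beta> \<eta> \<alpha> \<gamma> (\<eta> i) = (1::'a)" if it: "i < t" for i
      using it by (auto simp: csg_def)
    have sa: "csg t \<beta> \<eta> \<alpha> \<gamma> (\<alpha> i) = (-1::'a)" if it: "i < t" for i
      using it rng d2 d4 by (auto simp: csg_def) (metis less_irrefl)+
    have sg: "csg t \<beta> \<eta> \<alpha> \<gamma> (\<gamma> i) = (-1::'a)" if it: "i < t" for i
      using it rng d3 d5 by (auto simp: csg_def) (metis less_irrefl)+
    have s0: "csg t \<beta> \<eta> \<alpha> \<gamma> 0 = (1::'a)" by (simp add: csg_def)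
    have sn: "csg t \<beta> \<eta> \<alpha> \<gamma> w = (0::'a)" if "w \<noteq> 0" "w \<notin> Off" for w
      using that by (auto simp: csg_def Off_def)
    have rq': "x r = x (q*m + a)" for x :: "nat \<Rightarrow> 'a" using rq by simp
    have Fa: "(\<Sum>p<Nl a. f a p * (\<Sum>r'<n. G a p r' * x r')) = x r" for x
      by (simp only: Fev ofs0 c0 s0) (simp add: G_def n_def V0[OF qs am] rq[symmetric])
    have Fpos: "(\<Sum>p<Nl (sh w). f (sh w) p * (\<Sum>r'<n. G (sh w) p r' * x r')) =
        csg t \<beta> \<eta> \<alpha> \<gamma> w * (\<Sum>r'<n. G (sh w) (ccoord t s \<beta> \<eta> q w) r' * x r')"
      if "w < m" for w x using Fev ofs_sh[OF that] by simp
    have rec: "x r = (\<Sum>l\<in>R j. lam l * (\<Sum>p<Nl l. f l p * (\<Sum>r'<n. G l p r' * x r')))"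
      if j: "j < 2*t+1" for j x
    proof (cases "j = 0")
      case True
      have fin: "finite (R 0)" by (simp add: R_def)
      have aR: "a \<in> R 0" using am ofs0 rng by (fastforce simp: R_def Off_def)
      have z: "(\<Sum>p<Nl l. f l p * (\<Sum>r'<n. G l p r' * x r')) = 0" if l: "l \<in> R 0 - {a}" for l
      proof -
        have "ofs l \<noteq> 0" 
        proof
          assume "ofs l = 0"
          then have "l = a" using l sh_ofs[of l] am by (simp add: R_def sh_def)
          then show False using l by simp
        qed
        moreover have "ofs l \<notin> Off" using l by (simp add: R_def)
        ultimately show ?thesis unfolding Fev using sn by simp
      qed
      have "(\<Sum>l\<in>R 0. lam l * (\<Sum>p<Nl l. f l p * (\<Sum>r'<n. G l p r' * x r'))) =
          lam a * (\<Sum>p<Nl a. f a p * (\<Sum>r'<n. G a p r' * x r')) +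
          (\<Sum>l\<in>R 0 - {a}. lam l * (\<Sum>p<Nl l. f l p * (\<Sum>r'<n. G l p r' * x r')))"
        by (rule sum.remove[OF fin aR])
      also have "(\<Sum>l\<in>R 0 - {a}. lam l * (\<Sum>p<Nl l. f l p * (\<Sum>r'<n. G l p r' * x r'))) = 0"
        using z by (intro sum.neutral) simp
      finally show ?thesis using True Fa by (simp add: lam_def)
    next
      case False
      define i where "i = (j-1) div 2"
      have it: "i < t" using j False by (simp add: i_def)
      have bm: "\<beta> i < m" "\<eta> i < m" "\<alpha> i < m" "\<gamma> i < m" using rng[OF it] by auto
      show ?thesis
      proof (cases "odd j")
        case True
        have RJ: "R j = {sh (\<beta> i), sh (\<alpha> i)}" using False True by (simp add: R_def Oj_def i_def)
        have neq: "sh (\<beta> i) \<noteq> sh (\<alpha> i)" using shinj bm d2[OF it it] by blast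
        have e1: "(sh (\<beta> i) + m - \<beta> i) mod m = a" using am bm by (simp add: sh_def offmod2)
        have e2: "(sh (\<beta> i) + m - \<eta> i) mod m = sh (\<alpha> i)"
          using bm by (simp add: sh_def crossmod eqa[OF it])
        have F1: "(\<Sum>p<Nl (sh (\<beta> i)). f (sh (\<beta> i)) p * (\<Sum>r'<n. G (sh (\<beta> i)) p r' * x r'))
            = x r + x (q*m + sh (\<alpha> i))"
          by (subst Fpos[OF bm(1)], simp only: sb[OF it] cb[OF it] G_def n_def V1[OF qs m0] e1 e2 rq[symmetric], simp)
        have F2: "(\<Sum>p<Nl (sh (\<alpha> i)). f (sh (\<alpha> i)) p * (\<Sum>r'<n. G (sh (\<alpha> i)) p r' * x r'))
            = - x (q*m + sh (\<alpha> i))"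
          by (subst Fpos[OF bm(3)], simp only: sa[OF it] ca[OF it] G_def n_def V0[OF qs shm], simp)
        show ?thesis unfolding RJ lam_def using neq F1 F2 by simp
      next
        case odd: False
        have RJ: "R j = {sh (\<eta> i), sh (\<gamma> i)}" using False odd by (simp add: R_def Oj_def i_def)
        have neq: "sh (\<eta> i) \<noteq> sh (\<gamma> i)" using shinj bm d5[OF it it] by blast
        have e1: "(sh (\<eta> i) + m - \<eta> i) mod m = a" using am bm by (simp add: sh_def offmod2)
        have e2: "(sh (\<eta> i) + m - \<beta> i) mod m = sh (\<gamma> i)"
          using bm by (simp add: sh_def crossmod eqg[OF it])
        have F1: "(\<Sum>p<Nl (sh (\<eta> i)). f (sh (\<eta> i)) p * (\<Sum>r'<n. G (sh (\<eta> i)) p r' * x r'))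
            = x (q*m + sh (\<gamma> i)) + x r"
          by (subst Fpos[OF bm(2)], simp only: se[OF it] ce[OF it] G_def n_def V1[OF qs m0] e1 e2 rq[symmetric], simp)
        have F2: "(\<Sum>p<Nl (sh (\<gamma> i)). f (sh (\<gamma> i)) p * (\<Sum>r'<n. G (sh (\<gamma> i)) p r' * x r'))
            = - x (q*m + sh (\<gamma> i))"
          by (subst Fpos[OF bm(4)], simp only: sg[OF it] cg[OF it] G_def n_def V0[OF qs shm], simp)
        show ?thesis unfolding RJ lam_def using neq F1 F2 by simp
      qed
    qed
    have Rrec: "\<forall>j<2*t+1. \<forall>x :: nat \<Rightarrow> 'a.
           x r = (\<Sum>l\<in>R j. lam l * (\<Sum>p<Nl l. f l p * (\<Sum>r'<n. G l p r' * x r')))"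
      using rec by blast
    show ?thesis
      by (rule exI[of _ R], rule exI[of _ f], rule exI[of _ lam]) (intro conjI Rne Rdisj Runion Rrec)
  qed
  have "pir_code n ((t+1)*n) (2*t+1) m Nl G"
    unfolding pir_code_def using P1 P2 P3 by blast
  thus ?thesis unfolding has_PIR_def n_def by blast
qed

lemma count2:
  "count_list xs y \<ge> 2 \<Longrightarrow> \<exists>p p'. p < p' \<and> p' < length xs \<and> xs!p = y \<and> xs!p' = y"
proof (induction xs)
  case Nil
  then show ?case by simp
next
  case (Cons z zs)
  show ?case
  proof (cases "z = y")
    case True
    then have "count_list zs y \<ge> 1" using Cons.prems by simp
    then have "y \<in> set zs" using count_list_0_iff[of zs y] by auto
    then obtain p' where "p' < length zs" "zs!p' = y" by (metis in_set_conv_nth)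
    then show ?thesis using True by (intro exI[of _ 0] exI[of _ "Suc p'"]) simp
  next
    case False
    then have "count_list zs y \<ge> 2" using Cons.prems by simp
    then obtain p p' where "p < p'" "p' < length zs" "zs!p = y" "zs!p' = y" using Cons.IH by blast
    then show ?thesis by (intro exI[of _ "Suc p"] exI[of _ "Suc p'"]) simp
  qed
qed

lemma NP_bound:
  assumes "has_PIR TYPE('a::field) n N k m"
  shows "N_P TYPE('a) n k m \<le> N"
  unfolding N_P_def by (rule Least_le) (rule assms)

lemma part2:
  fixes t s :: nat
  assumes t1: "t \<ge> 1" and s1: "s \<ge> 1"
  shows "has_PIR TYPE('a::field) ((4*t+2)*s) ((t+1)*((4*t+2)*s)) (2*t+1) (4*t+2)"
proof -
  define m where "m = 4*t+2"
  define \<alpha> where "\<alpha> = (\<lambda>i::nat. 2*i+2)"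
  define \<gamma> where "\<gamma> = (\<lambda>i::nat. 4*t-2*i)"
  define \<beta> where "\<beta> = (\<lambda>i::nat. if odd i then i+2 else 2*t+3+i)"
  define \<eta> where "\<eta> = (\<lambda>i::nat. if odd i then 4*t+2-i else 2*t+1-i)"
  have "has_PIR TYPE('a) (m*s) ((t+1)*(m*s)) (2*t+1) m"
  proof (rule construction[where \<beta>=\<beta> and \<eta>=\<eta> and \<alpha>=\<alpha> and \<gamma>=\<gamma>])
    show "1 \<le> s" by (rule s1)
    show "0 < \<beta> i \<and> \<beta> i < m \<and> 0 < \<eta> i \<and> \<eta> i < m \<and> 0 < \<alpha> i \<and> \<alpha> i < m \<and> 0 < \<gamma> i \<and> \<gamma> i < m"
      if "i < t" for i using that by (auto simp: m_def \<alpha>_def \<beta>_def \<gamma>_def \<eta>_def dest: odd_pos)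
    show "(\<beta> i + m - \<eta> i) mod m = \<alpha> i" if "i < t" for i
    proof (cases "odd i")
      case True
      have "\<beta> i + m - \<eta> i = 2*i+2" using True that by (simp add: m_def \<beta>_def \<eta>_def)
      then show ?thesis using that by (simp add: m_def \<alpha>_def)
    next
      case False
      have "\<beta> i + m - \<eta> i = m + (2*i+2)" using False that by (simp add: m_def \<beta>_def \<eta>_def)
      then have "(\<beta> i + m - \<eta> i) mod m = (2*i+2) mod m" by (metis mod_add_self1)
      then show ?thesis using that by (simp add: m_def \<alpha>_def)
    qed
    show "(\<eta> i + m - \<beta> i) mod m = \<gamma> i" if "i < t" for i
    proof (cases "odd i")
      case True
      have "\<eta> i + m - \<beta> i = m + (4*t-2*i)" using True that by (simp add: m_def \<beta>_def \<eta>_def)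
      then have "(\<eta> i + m - \<beta> i) mod m = (4*t-2*i) mod m" by (metis mod_add_self1)
      then show ?thesis using that by (simp add: m_def \<gamma>_def)
    next
      case False
      have "\<eta> i + m - \<beta> i = 4*t-2*i" using False that by (simp add: m_def \<beta>_def \<eta>_def)
      then show ?thesis using that by (simp add: m_def \<gamma>_def)
    qed
    show "\<And>i i'. i<t \<Longrightarrow> i'<t \<Longrightarrow> \<beta> i = \<beta> i' \<Longrightarrow> i = i'"
      by (auto simp: \<beta>_def split: if_splits)
    show "\<And>i i'. i<t \<Longrightarrow> i'<t \<Longrightarrow> \<eta> i = \<eta> i' \<Longrightarrow> i = i'"
      by (auto simp: \<eta>_def split: if_splits)
    show "\<And>i i'. i<t \<Longrightarrow> i'<t \<Longrightarrow> \<alpha> i = \<alpha> i' \<Longrightarrow> i = i'"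
      by (auto simp: \<alpha>_def)
    show "\<And>i i'. i<t \<Longrightarrow> i'<t \<Longrightarrow> \<gamma> i = \<gamma> i' \<Longrightarrow> i = i'"
      by (auto simp: \<gamma>_def)
    show "\<And>i i'. i<t \<Longrightarrow> i'<t \<Longrightarrow> \<beta> i \<noteq> \<eta> i'"
      by (auto simp: \<beta>_def \<eta>_def split: if_splits)
    show "\<And>i i'. i<t \<Longrightarrow> i'<t \<Longrightarrow> \<beta> i \<noteq> \<alpha> i'"
      by (auto simp: \<beta>_def \<alpha>_def split: if_splits; presburger)
    show "\<And>i i'. i<t \<Longrightarrow> i'<t \<Longrightarrow> \<beta> i \<noteq> \<gamma> i'"
      by (auto simp: \<beta>_def \<gamma>_def split: if_splits; presburger)
    show "\<And>i i'. i<t \<Longrightarrow> i'<t \<Longrightarrow> \<eta> i \<noteq> \<alpha> i'"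
      by (auto simp: \<eta>_def \<alpha>_def split: if_splits; presburger)
    show "\<And>i i'. i<t \<Longrightarrow> i'<t \<Longrightarrow> \<eta> i \<noteq> \<gamma> i'"
      by (auto simp: \<eta>_def \<gamma>_def split: if_splits; presburger)
    show "\<And>i i'. i<t \<Longrightarrow> i'<t \<Longrightarrow> \<alpha> i \<noteq> \<gamma> i'"
      by (auto simp: \<alpha>_def \<gamma>_def)
  qed
  then show ?thesis by (simp add: m_def)
qed

lemma part1:
  fixes t s :: nat and v :: "nat list"
  assumes t1: "t \<ge> 1" and s1: "s \<ge> 1" and gv: "good_vec t v" and lv: "length v = 2*t"
  shows "has_PIR TYPE('a::field) ((4*t+1)*s) ((t+1)*((4*t+1)*s)) (2*t+1) (4*t+1)"
proof -
  have cnt: "\<forall>j\<in>{1..t}. count_list v j = 2" using gv by (simp add: good_vec_def)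
  have dif: "\<And>i i'. i < i' \<Longrightarrow> i' < length v \<Longrightarrow> v!i = v!i' \<Longrightarrow> v!i \<in> {1..t} \<Longrightarrow> i' - i = v!i"
    using gv unfolding good_vec_def by blast
  have ex: "\<forall>j\<in>{1..t}. \<exists>p p'. p < p' \<and> p' < length v \<and> v!p = j \<and> v!p' = j"
  proof
    fix j assume "j \<in> {1..t}"
    then have "count_list v j = 2" using cnt by blast
    then show "\<exists>p p'. p < p' \<and> p' < length v \<and> v!p = j \<and> v!p' = j" using count2[of v j] by simp
  qed
  have "\<forall>j\<in>{1..t}. \<exists>pp. fst pp < snd pp \<and> snd pp < length v \<and> v!fst pp = j \<and> v!snd pp = j"
  proof
    fix j assume "j \<in> {1..t}"
    then obtain p p' where "p < p' \<and> p' < length v \<and> v!p = j \<and> v!p' = j" using ex by blast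
    then show "\<exists>pp. fst pp < snd pp \<and> snd pp < length v \<and> v!fst pp = j \<and> v!snd pp = j"
      by (intro exI[of _ "(p,p')"]) simp
  qed
  from bchoice[OF this] obtain PQ where PQ: "\<forall>j\<in>{1..t}. fst (PQ j) < snd (PQ j) \<and> snd (PQ j) < length v \<and> v!fst (PQ j) = j \<and> v!snd (PQ j) = j"
    ..
  define P where "P = (\<lambda>j. fst (PQ j))"
  define P' where "P' = (\<lambda>j. snd (PQ j))"
  have PP: "\<forall>j\<in>{1..t}. P j < P' j \<and> P' j < length v \<and> v!P j = j \<and> v!P' j = j"
    using PQ by (simp add: P_def P'_def)
  have H: "P (i+1) < P' (i+1) \<and> P' (i+1) < 2*t \<and> v!P (i+1) = i+1 \<and> v!P' (i+1) = i+1 \<and> P' (i+1) = P (i+1) + (i+1)"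
    if "i < t" for i
  proof -
    have j: "i+1 \<in> {1..t}" using that by simp
    have a: "P (i+1) < P' (i+1) \<and> P' (i+1) < length v \<and> v!P (i+1) = i+1 \<and> v!P' (i+1) = i+1"
      using PP j by blast
    have "P' (i+1) - P (i+1) = i+1" using dif[of "P (i+1)" "P' (i+1)"] a j by simp
    then show ?thesis using a lv by simp
  qed
  define m where "m = 4*t+1"
  define \<alpha> where "\<alpha> = (\<lambda>i::nat. i+1)"
  define \<gamma> where "\<gamma> = (\<lambda>i::nat. 4*t-i)"
  define \<beta> where "\<beta> = (\<lambda>i::nat. t + P' (i+1) + 1)"
  define \<eta> where "\<eta> = (\<lambda>i::nat. t + P (i+1) + 1)"
  have "has_PIR TYPE('a) (m*s) ((t+1)*(m*s)) (2*t+1) m"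
  proof (rule construction[where \<beta>=\<beta> and \<eta>=\<eta> and \<alpha>=\<alpha> and \<gamma>=\<gamma>])
    show "1 \<le> s" by (rule s1)
    show "0 < \<beta> i \<and> \<beta> i < m \<and> 0 < \<eta> i \<and> \<eta> i < m \<and> 0 < \<alpha> i \<and> \<alpha> i < m \<and> 0 < \<gamma> i \<and> \<gamma> i < m"
      if "i < t" for i using that H[OF that] by (auto simp: m_def \<alpha>_def \<beta>_def \<gamma>_def \<eta>_def)
    show "(\<beta> i + m - \<eta> i) mod m = \<alpha> i" if "i < t" for i
    proof -
      have "\<beta> i + m - \<eta> i = m + (i+1)" using H[OF that] by (simp add: \<beta>_def \<eta>_def)
      then have "(\<beta> i + m - \<eta> i) mod m = (i+1) mod m" by (metis mod_add_self1)
      then show ?thesis using that by (simp add: m_def \<alpha>_def)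
    qed
    show "(\<eta> i + m - \<beta> i) mod m = \<gamma> i" if "i < t" for i
    proof -
      have "\<eta> i + m - \<beta> i = 4*t-i" using H[OF that] by (simp add: \<beta>_def \<eta>_def m_def)
      then show ?thesis using that by (simp add: m_def \<gamma>_def)
    qed
    show "\<And>i i'. i<t \<Longrightarrow> i'<t \<Longrightarrow> \<beta> i = \<beta> i' \<Longrightarrow> i = i'"
    proof -
      fix i i' assume a: "i<t" "i'<t" "\<beta> i = \<beta> i'"
      then have "P' (i+1) = P' (i'+1)" by (simp add: \<beta>_def)
      then have "v ! P' (i+1) = v ! P' (i'+1)" by simp
      then show "i = i'" using H[OF a(1)] H[OF a(2)] by simp
    qed
    show "\<And>i i'. i<t \<Longrightarrow> i'<t \<Longrightarrow> \<eta> i = \<eta> i' \<Longrightarrow> i = i'"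
    proof -
      fix i i' assume a: "i<t" "i'<t" "\<eta> i = \<eta> i'"
      then have "P (i+1) = P (i'+1)" by (simp add: \<eta>_def)
      then have "v ! P (i+1) = v ! P (i'+1)" by simp
      then show "i = i'" using H[OF a(1)] H[OF a(2)] by simp
    qed
    show "\<And>i i'. i<t \<Longrightarrow> i'<t \<Longrightarrow> \<alpha> i = \<alpha> i' \<Longrightarrow> i = i'"
      by (auto simp: \<alpha>_def)
    show "\<And>i i'. i<t \<Longrightarrow> i'<t \<Longrightarrow> \<gamma> i = \<gamma> i' \<Longrightarrow> i = i'"
      by (auto simp: \<gamma>_def)
    show "\<beta> i \<noteq> \<eta> i'" if "i<t" "i'<t" for i i'
    proof
      assume "\<beta> i = \<eta> i'"
      then have e: "P' (i+1) = P (i'+1)" by (simp add: \<beta>_def \<eta>_def)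
      then have "v ! P' (i+1) = v ! P (i'+1)" by simp
      then have "i+1 = i'+1" using H[OF that(1)] H[OF that(2)] by simp
      then show False using e H[OF that(1)] by simp
    qed
    show "\<beta> i \<noteq> \<alpha> i'" if "i<t" "i'<t" for i i'
      using H[OF that(1)] that unfolding \<beta>_def \<alpha>_def by arith
    show "\<beta> i \<noteq> \<gamma> i'" if "i<t" "i'<t" for i i'
      using H[OF that(1)] that unfolding \<beta>_def \<gamma>_def by arith
    show "\<eta> i \<noteq> \<alpha> i'" if "i<t" "i'<t" for i i'
      using H[OF that(1)] that unfolding \<eta>_def \<alpha>_def by arith
    show "\<eta> i \<noteq> \<gamma> i'" if "i<t" "i'<t" for i i'
      using H[OF that(1)] that unfolding \<eta>_def \<gamma>_def by arith
    show "\<And>i i'. i<t \<Longrightarrow> i'<t \<Longrightarrow> \<alpha> i \<noteq> \<gamma> i'"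
      by (auto simp: \<alpha>_def \<gamma>_def)
  qed
  then show ?thesis by (simp add: m_def)
qed

theorem corollary4p3:
  fixes t :: nat
  assumes "t \<ge> 1"
  shows "((\<exists>v. good_vec t v \<and> length v = 2*t) \<longrightarrow>
            (\<forall>n. n \<ge> 1 \<and> (4*t+1) dvd n \<longrightarrow>
               (\<exists>N. has_PIR TYPE('a::{finite,field}) n N (2*t+1) (4*t+1)) \<and>
               N_P TYPE('a) n (2*t+1) (4*t+1) \<le> (t+1)*n))
       \<and> (\<forall>n. n \<ge> 1 \<and> (4*t+2) dvd n \<longrightarrow>
               (\<exists>N. has_PIR TYPE('a) n N (2*t+1) (4*t+2)) \<and>
               N_P TYPE('a) n (2*t+1) (4*t+2) \<le> (t+1)*n)"
  apply (rule conjI)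
  subgoal
  proof (intro impI allI)
    fix n assume ev: "\<exists>v. good_vec t v \<and> length v = 2*t" and n: "n \<ge> 1 \<and> (4*t+1) dvd n"
    then obtain v where v: "good_vec t v" "length v = 2*t" by blast
    from n obtain s where ns: "n = (4*t+1)*s" by (auto elim: dvdE)
    have "s \<ge> 1" using n ns by (cases s) auto
    then have h: "has_PIR TYPE('a) n ((t+1)*n) (2*t+1) (4*t+1)"
      using part1[OF assms _ v] ns by blast
    show "(\<exists>N. has_PIR TYPE('a) n N (2*t+1) (4*t+1)) \<and> N_P TYPE('a) n (2*t+1) (4*t+1) \<le> (t+1)*n"
      using h NP_bound[OF h] by blast
  qed
  subgoal
  proof (intro impI allI)
    fix n assume n: "n \<ge> 1 \<and> (4*t+2) dvd n"
    from n obtain s where ns: "n = (4*t+2)*s" by (auto elim: dvdE)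
    have "s \<ge> 1" using n ns by (cases s) auto
    then have h: "has_PIR TYPE('a) n ((t+1)*n) (2*t+1) (4*t+2)"
      using part2[OF assms] ns by blast
    show "(\<exists>N. has_PIR TYPE('a) n N (2*t+1) (4*t+2)) \<and> N_P TYPE('a) n (2*t+1) (4*t+2) \<le> (t+1)*n"
      using h NP_bound[OF h] by blast
  qed
  done

end
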